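(* Let $H$ be a hexagonal system with a perfect matching, and let $H_1,H_2,\ldots,H_k$ ($k\ge 1$) be its normal components. Then $$cf(H)=\sum_{i=1}^{k} cf(H_i).$$
   Context: A hexagonal system (HS) is a finite 2-connected plane graph in which every interior face is a regular hexagon (a hexagon of the hexagonal lattice); its interior faces are called hexagons. For a graph $G$ with a perfect matching and a perfect matching $M$ of $G$, a forcing set of $M$ is a subset of $M$ contained in no other perfect matching of $G$. A complete forcing set of $G$ is a set $S\subseteq E(G)$ such that for every perfect matching $M$ of $G$, $S\cap M$ is a forcing set of $M$. The complete forcing number $cf(G)$ is the minimum cardinality of a complete forcing set of $G$. An edge of an HS $H$ with a perfect matching is a fixed double edge if it lies in every perfect matching of $H$, and a fixed single edge if it lies in no perfect matching of $H$; these are the fixed edges. $H$ is normal if it has no fixed edge. The non-fixed edges of $H$ span a subgraph each of whose components is a normal HS; these components are the normal components of $H$ (if $H$ is normal, its only normal component is $H$ itself). *)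

theory Defs
  imports Main
begin

text \<open>The lattice is
realised as the brick-wall graph: horizontal edges join (x,y) and (x+1,y);
vertical edges join (x,y) and (x,y+1) exactly when x+y is even. This plane graph
is isomorphic (as a plane graph) to the hexagonal lattice; its faces (cells) are
indexed by points (a,b) with a+b even and have six vertices
(a,b),(a+1,b),(a+2,b),(a,b+1),(a+1,b+1),(a+2,b+1).\<close>

type_synonym vert = "int \<times> int"
type_synonym edge = "vert set"

definition lattice_edge :: "edge \<Rightarrow> bool" where
  "lattice_edge e \<longleftrightarrow>
     (\<exists>x y. e = {(x,y),(x+1,y)}) \<or> (\<exists>x y. even (x+y) \<and> e = {(x,y),(x,y+1)})"

definition cell :: "vert \<Rightarrow> bool" where
  "cell h \<longleftrightarrow> even (fst h + snd h)"

definition hex_edges :: "vert \<Rightarrow> edge set" where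
  "hex_edges h = (case h of (a,b) \<Rightarrow>
     {{(a,b),(a+1,b)}, {(a+1,b),(a+2,b)}, {(a,b+1),(a+1,b+1)}, {(a+1,b+1),(a+2,b+1)},
      {(a,b),(a,b+1)}, {(a+2,b),(a+2,b+1)}})"

definition dual_adj :: "edge set \<Rightarrow> (vert \<times> vert) set" where
  "dual_adj E = {(h,h'). cell h \<and> cell h' \<and> h \<noteq> h' \<and>
                   (\<exists>e. e \<in> hex_edges h \<and> e \<in> hex_edges h' \<and> e \<notin> E)}"

text \<open>A cell lies in the unbounded face of the plane graph (V,E) iff it can be joined,
crossing only edges not in E, to a cell lying strictly to the right of all of V.\<close>
definition exterior_cell :: "vert set \<Rightarrow> edge set \<Rightarrow> vert \<Rightarrow> bool" where
  "exterior_cell V E h \<longleftrightarrow>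
     (\<exists>h'. (h,h') \<in> (dual_adj E)\<^sup>* \<and> (\<forall>v\<in>V. fst v < fst h'))"

definition adj_rel :: "edge set \<Rightarrow> (vert \<times> vert) set" where
  "adj_rel E = {(u,w). {u,w} \<in> E}"

definition connected_graph :: "vert set \<Rightarrow> edge set \<Rightarrow> bool" where
  "connected_graph V E \<longleftrightarrow> (\<forall>u\<in>V. \<forall>w\<in>V. (u,w) \<in> (adj_rel E)\<^sup>*)"

definition two_connected :: "vert set \<Rightarrow> edge set \<Rightarrow> bool" where
  "two_connected V E \<longleftrightarrow> card V \<ge> 3 \<and> connected_graph V E \<and>
     (\<forall>v\<in>V. connected_graph (V - {v}) {e\<in>E. v \<notin> e})"

text \<open>Hexagonal system: a finite 2-connected subgraph (V,E) of the hexagonal lattice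
(with its lattice embedding) every interior (bounded) face of which is a single
lattice hexagon, i.e. every cell not in the unbounded face has all six edges in E.\<close>
definition hexagonal_system :: "vert set \<Rightarrow> edge set \<Rightarrow> bool" where
  "hexagonal_system V E \<longleftrightarrow>
     finite V \<and> (\<forall>e\<in>E. lattice_edge e \<and> e \<subseteq> V) \<and> two_connected V E \<and>
     (\<forall>h. cell h \<and> \<not> exterior_cell V E h \<longrightarrow> hex_edges h \<subseteq> E)"

definition perfect_matching :: "vert set \<Rightarrow> edge set \<Rightarrow> edge set \<Rightarrow> bool" where
  "perfect_matching V E M \<longleftrightarrow> M \<subseteq> E \<and> (\<forall>v\<in>V. \<exists>!e. e \<in> M \<and> v \<in> e)"

definition forcing_set :: "vert set \<Rightarrow> edge set \<Rightarrow> edge set \<Rightarrow> edge set \<Rightarrow> bool" where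
  "forcing_set V E M S \<longleftrightarrow> S \<subseteq> M \<and>
     (\<forall>M'. perfect_matching V E M' \<and> S \<subseteq> M' \<longrightarrow> M' = M)"

definition complete_forcing_set :: "vert set \<Rightarrow> edge set \<Rightarrow> edge set \<Rightarrow> bool" where
  "complete_forcing_set V E S \<longleftrightarrow> S \<subseteq> E \<and>
     (\<forall>M. perfect_matching V E M \<longrightarrow> forcing_set V E M (S \<inter> M))"

definition cf :: "vert set \<Rightarrow> edge set \<Rightarrow> nat" where
  "cf V E = Min (card ` {S. complete_forcing_set V E S})"

definition fixed_double :: "vert set \<Rightarrow> edge set \<Rightarrow> edge \<Rightarrow> bool" where
  "fixed_double V E e \<longleftrightarrow> e \<in> E \<and> (\<forall>M. perfect_matching V E M \<longrightarrow> e \<in> M)"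

definition fixed_single :: "vert set \<Rightarrow> edge set \<Rightarrow> edge \<Rightarrow> bool" where
  "fixed_single V E e \<longleftrightarrow> e \<in> E \<and> (\<forall>M. perfect_matching V E M \<longrightarrow> e \<notin> M)"

definition nonfixed_edges :: "vert set \<Rightarrow> edge set \<Rightarrow> edge set" where
  "nonfixed_edges V E = {e\<in>E. \<not> fixed_double V E e \<and> \<not> fixed_single V E e}"

definition normal_components :: "vert set \<Rightarrow> edge set \<Rightarrow> (vert set \<times> edge set) set" where
  "normal_components V E =
     (let N = nonfixed_edges V E;
          comp = (\<lambda>v. {u. (v,u) \<in> (adj_rel N)\<^sup>*})
      in {(comp v, {e\<in>N. e \<subseteq> comp v}) | v. v \<in> \<Union>N})"

end

theory Submission
  imports Defs
begin

definition ncomp :: "vert set \<Rightarrow> edge set \<Rightarrow> vert \<Rightarrow> vert set" where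
  "ncomp V E v = {u. (v,u) \<in> (adj_rel (nonfixed_edges V E))\<^sup>*}"

definition nedges :: "vert set \<Rightarrow> edge set \<Rightarrow> vert \<Rightarrow> edge set" where
  "nedges V E v = {e \<in> nonfixed_edges V E. e \<subseteq> ncomp V E v}"

lemma nc_eq: "normal_components V E = (\<lambda>v. (ncomp V E v, nedges V E v)) ` \<Union>(nonfixed_edges V E)"
  unfolding normal_components_def ncomp_def nedges_def Let_def by (simp only: setcompr_eq_image Collect_mem_eq)

lemma pmE: "perfect_matching V E M \<Longrightarrow> M \<subseteq> E"
  unfolding perfect_matching_def by (rule conjunct1)

lemma pm_ex: "perfect_matching V E M \<Longrightarrow> v \<in> V \<Longrightarrow> \<exists>e. e \<in> M \<and> v \<in> e"
  unfolding perfect_matching_def by (metis ex1_implies_ex)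

lemma pm_uniq: "perfect_matching V E M \<Longrightarrow> v \<in> V \<Longrightarrow> e \<in> M \<Longrightarrow> v \<in> e \<Longrightarrow> f \<in> M \<Longrightarrow> v \<in> f \<Longrightarrow> e = f"
  unfolding perfect_matching_def by (metis (no_types, lifting))

lemma pm_intro:
  assumes "M \<subseteq> E" "\<And>v. v \<in> V \<Longrightarrow> \<exists>e. e \<in> M \<and> v \<in> e"
    "\<And>v e f. v \<in> V \<Longrightarrow> e \<in> M \<Longrightarrow> v \<in> e \<Longrightarrow> f \<in> M \<Longrightarrow> v \<in> f \<Longrightarrow> e = f"
  shows "perfect_matching V E M"
  unfolding perfect_matching_def
proof (intro conjI ballI)
  show "M \<subseteq> E" by (rule assms(1))
  fix v assume v: "v \<in> V"
  obtain e where "e \<in> M \<and> v \<in> e" using assms(2)[OF v] by blast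
  thus "\<exists>!e. e \<in> M \<and> v \<in> e" using assms(3)[OF v] by (intro ex1I) blast+
qed

lemma cf_le:
  assumes "finite E'" "complete_forcing_set V' E' S"
  shows "cf V' E' \<le> card S"
proof -
  have "{S. complete_forcing_set V' E' S} \<subseteq> Pow E'"
    by (auto simp: complete_forcing_set_def)
  hence "finite {S. complete_forcing_set V' E' S}" using assms(1) finite_Pow_iff finite_subset by metis
  thus ?thesis unfolding cf_def using assms(2) by (intro Min_le) auto
qed

lemma cf_attained:
  assumes "finite E'" "\<forall>e\<in>E'. \<exists>a b. e = {a,b} \<and> e \<subseteq> V'"
  shows "\<exists>S. complete_forcing_set V' E' S \<and> card S = cf V' E'"
proof -
  have key: "M' = M" if pm: "perfect_matching V' E' M" and pm': "perfect_matching V' E' M'"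
    and h: "E' \<inter> M \<subseteq> M'" for M M'
  proof -
    have "M \<subseteq> E'" using pm by (rule pmE)
    hence MM: "M \<subseteq> M'" using h by blast
    have "M' \<subseteq> M"
    proof
      fix e assume e: "e \<in> M'"
      have "e \<in> E'" using e pmE[OF pm'] by blast
      from bspec[OF assms(2) this] obtain a b where ab: "e = {a,b} \<and> e \<subseteq> V'"
        by (elim exE) (erule that)
      hence a: "a \<in> V'" "a \<in> e" by blast+
      obtain m where m: "m \<in> M" "a \<in> m" using pm_ex[OF pm a(1)] by blast
      have "m \<in> M'" using m MM by blast
      hence "m = e" using pm_uniq[OF pm' a(1) _ m(2) e a(2)] by blast
      thus "e \<in> M" using m by simp
    qed
    thus ?thesis using MM by (rule equalityI)
  qed
  have full: "complete_forcing_set V' E' E'"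
    unfolding complete_forcing_set_def forcing_set_def
    using key by blast
  have "{S. complete_forcing_set V' E' S} \<subseteq> Pow E'"
    unfolding complete_forcing_set_def by blast
  hence fin: "finite {S. complete_forcing_set V' E' S}" using assms(1) finite_Pow_iff finite_subset by metis
  have ne: "card ` {S. complete_forcing_set V' E' S} \<noteq> {}" using full by blast
  have "cf V' E' \<in> card ` {S. complete_forcing_set V' E' S}"
    unfolding cf_def using fin ne by (intro Min_in) simp_all
  then obtain S where "S \<in> {S. complete_forcing_set V' E' S}" "cf V' E' = card S" by (rule imageE)
  thus ?thesis by auto
qed

context
  fixes V :: "vert set" and E :: "edge set"
  assumes two: "\<forall>e\<in>E. \<exists>a b. e = {a,b}"
    and subV: "\<forall>e\<in>E. e \<subseteq> V"
    and finE: "finite E"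
    and haspm: "\<exists>M. perfect_matching V E M"
begin

abbreviation "N \<equiv> nonfixed_edges V E"

lemma twoE:
  assumes "e \<in> E" obtains a b where "e = {a,b}"
  using bspec[OF two assms] by (elim exE) (erule that)

lemma N_sub: "N \<subseteq> E" by (auto simp: nonfixed_edges_def)

lemma adj_sym: "sym (adj_rel N)"
  unfolding sym_def adj_rel_def by (simp add: insert_commute)

lemma comp_in_N:
  assumes "v \<in> \<Union>N" "u \<in> ncomp V E v" shows "u \<in> \<Union>N"
proof -
  have "(v,u) \<in> (adj_rel N)\<^sup>*" using assms(2) by (simp add: ncomp_def)
  thus ?thesis
  proof (induction rule: rtrancl_induct)
    case base then show ?case using assms(1) .
  next
    case (step y z)
    then have "{y,z} \<in> N" by (simp add: adj_rel_def)
    thus ?case by blast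
  qed
qed

lemma comp_same:
  assumes "u \<in> ncomp V E v" shows "ncomp V E u = ncomp V E v"
proof -
  have vu: "(v,u) \<in> (adj_rel N)\<^sup>*" using assms by (simp add: ncomp_def)
  have "sym ((adj_rel N)\<^sup>*)" using adj_sym by (rule sym_rtrancl)
  hence uv: "(u,v) \<in> (adj_rel N)\<^sup>*" using vu by (rule symD)
  show ?thesis
  proof (rule set_eqI)
    fix x
    show "x \<in> ncomp V E u \<longleftrightarrow> x \<in> ncomp V E v"
      unfolding ncomp_def mem_Collect_eq using rtrancl_trans[OF uv] rtrancl_trans[OF vu] by blast
  qed
qed

lemma self_comp: "v \<in> ncomp V E v" by (simp add: ncomp_def)

lemma edge_in_nedges:
  assumes "e \<in> N" shows "\<exists>a. a \<in> \<Union>N \<and> e \<in> nedges V E a"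
proof -
  have "e \<in> E" using assms N_sub by blast
  then obtain a b where ab: "e = {a,b}" by (rule twoE)
  have "(a,b) \<in> adj_rel N" using assms ab by (simp add: adj_rel_def)
  hence "b \<in> ncomp V E a" by (simp add: ncomp_def)
  hence "e \<subseteq> ncomp V E a" using ab self_comp by auto
  moreover have "a \<in> \<Union>N" using assms ab by blast
  ultimately show ?thesis using assms unfolding nedges_def by blast
qed

lemma key_edge:
  assumes pm: "perfect_matching V E M" and v: "v \<in> \<Union>N" and u: "u \<in> ncomp V E v"
    and e: "e \<in> M" "u \<in> e"
  shows "e \<in> nedges V E v"
proof -
  have uN: "u \<in> \<Union>N" using comp_in_N v u .
  have eE: "e \<in> E" using pmE[OF pm] e by blast
  have nfs: "\<not> fixed_single V E e" using pm e unfolding fixed_single_def by blast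
  have nfd: "\<not> fixed_double V E e"
  proof
    assume fd: "fixed_double V E e"
    obtain f where f: "f \<in> N" "u \<in> f" using uN by blast
    hence "\<not> fixed_single V E f" "f \<in> E" unfolding nonfixed_edges_def by blast+
    then obtain M2 where M2: "perfect_matching V E M2" "f \<in> M2" unfolding fixed_single_def by blast
    have "e \<in> M2" using fd M2 unfolding fixed_double_def by blast
    have uV: "u \<in> V" using subV eE e by blast
    have "e = f" using pm_uniq[OF M2(1) uV \<open>e \<in> M2\<close> e(2) M2(2) f(2)] .
    thus False using fd f unfolding nonfixed_edges_def by blast
  qed
  have eN: "e \<in> N" using eE nfs nfd unfolding nonfixed_edges_def by blast
  obtain a b where ab: "e = {a,b}" using eE by (rule twoE)
  obtain w where w: "e = {u,w}" using ab e(2) by (metis empty_iff insertE insert_commute)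
  have "(u,w) \<in> adj_rel N" using eN w by (simp add: adj_rel_def)
  hence "(v,w) \<in> (adj_rel N)\<^sup>*" using u by (simp add: ncomp_def)
  hence "w \<in> ncomp V E v" by (simp add: ncomp_def)
  hence "e \<subseteq> ncomp V E v" using w u by blast
  thus ?thesis using eN unfolding nedges_def by blast
qed

lemma restrict_pm:
  assumes pm: "perfect_matching V E M" and v: "v \<in> \<Union>N"
  shows "perfect_matching (ncomp V E v) (nedges V E v) (M \<inter> nedges V E v)"
proof (rule pm_intro)
  show "M \<inter> nedges V E v \<subseteq> nedges V E v" by blast
  fix u assume u: "u \<in> ncomp V E v"
  have "u \<in> \<Union>N" using comp_in_N v u .
  hence uV: "u \<in> V" using N_sub subV by blast
  obtain e where e: "e \<in> M" "u \<in> e" using pm_ex[OF pm uV] by blast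
  have "e \<in> nedges V E v" using key_edge[OF pm v u e] .
  thus "\<exists>e. e \<in> M \<inter> nedges V E v \<and> u \<in> e" using e by blast
next
  fix u e f assume u: "u \<in> ncomp V E v" and ef: "e \<in> M \<inter> nedges V E v" "u \<in> e" "f \<in> M \<inter> nedges V E v" "u \<in> f"
  have "u \<in> \<Union>N" using comp_in_N v u .
  hence uV: "u \<in> V" using N_sub subV by blast
  show "e = f" using pm_uniq[OF pm uV] ef by blast
qed

lemma extend_pm:
  assumes pm: "perfect_matching V E M" and v: "v \<in> \<Union>N"
    and X: "perfect_matching (ncomp V E v) (nedges V E v) X"
  shows "perfect_matching V E ((M - nedges V E v) \<union> X)"
proof -
  have NE: "nedges V E v \<subseteq> E" using N_sub unfolding nedges_def by blast
  have XE: "X \<subseteq> nedges V E v" using pmE[OF X] .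
  have Xsub: "\<And>x. x \<in> X \<Longrightarrow> x \<subseteq> ncomp V E v" using XE unfolding nedges_def by blast
  show ?thesis
  proof (rule pm_intro)
    show "(M - nedges V E v) \<union> X \<subseteq> E" using pmE[OF pm] XE NE by blast
  next
    fix u assume uV: "u \<in> V"
    show "\<exists>e. e \<in> (M - nedges V E v) \<union> X \<and> u \<in> e"
    proof (cases "u \<in> ncomp V E v")
      case True
      then show ?thesis using pm_ex[OF X True] by blast
    next
      case False
      obtain m where m: "m \<in> M" "u \<in> m" using pm_ex[OF pm uV] by blast
      have "m \<notin> nedges V E v" using False m unfolding nedges_def by blast
      thus ?thesis using m by blast
    qed
  next
    fix u e f assume uV: "u \<in> V" and ef: "e \<in> (M - nedges V E v) \<union> X" "u \<in> e" "f \<in> (M - nedges V E v) \<union> X" "u \<in> f"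
    show "e = f"
    proof (cases "u \<in> ncomp V E v")
      case True
      have "e \<in> X" using ef(1,2) key_edge[OF pm v True] by blast
      moreover have "f \<in> X" using ef(3,4) key_edge[OF pm v True] by blast
      ultimately show ?thesis using pm_uniq[OF X True] ef(2,4) by blast
    next
      case False
      have "e \<in> M" using ef(1,2) Xsub False by blast
      moreover have "f \<in> M" using ef(3,4) Xsub False by blast
      ultimately show ?thesis using pm_uniq[OF pm uV] ef(2,4) by blast
    qed
  qed
qed

lemma cfs_restrict:
  assumes S: "complete_forcing_set V E S" and v: "v \<in> \<Union>N"
  shows "complete_forcing_set (ncomp V E v) (nedges V E v) (S \<inter> nedges V E v)"
  unfolding complete_forcing_set_def forcing_set_def
proof (intro conjI allI impI)
  show "S \<inter> nedges V E v \<subseteq> nedges V E v" by auto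
  fix X assume X: "perfect_matching (ncomp V E v) (nedges V E v) X"
  show "S \<inter> nedges V E v \<inter> X \<subseteq> X" by auto
  fix Y assume Y: "perfect_matching (ncomp V E v) (nedges V E v) Y \<and> S \<inter> nedges V E v \<inter> X \<subseteq> Y"
  obtain M0 where M0: "perfect_matching V E M0" using haspm by blast
  let ?Ec = "nedges V E v"
  define M where "M = (M0 - ?Ec) \<union> X"
  define M' where "M' = (M0 - ?Ec) \<union> Y"
  have pmM: "perfect_matching V E M" unfolding M_def using extend_pm[OF M0 v X] .
  have pmM': "perfect_matching V E M'" unfolding M'_def using extend_pm[OF M0 v] Y by blast
  have XE: "X \<subseteq> ?Ec" "Y \<subseteq> ?Ec" using pmE[OF X] pmE[of _ _ Y] Y by blast+
  have "S \<inter> M \<subseteq> M'" using Y XE unfolding M_def M'_def by blast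
  hence "M' = M" using S pmM pmM' unfolding complete_forcing_set_def forcing_set_def by blast
  hence "M' \<inter> ?Ec = M \<inter> ?Ec" by simp
  moreover have "M' \<inter> ?Ec = Y" "M \<inter> ?Ec = X" using XE unfolding M_def M'_def by blast+
  ultimately show "Y = X" by simp
qed

lemma pm_sub:
  assumes M: "perfect_matching V E M" and M': "perfect_matching V E M'"
    and eq: "\<forall>v\<in>\<Union>N. M \<inter> nedges V E v = M' \<inter> nedges V E v"
  shows "M \<subseteq> M'"
proof
  fix e assume e: "e \<in> M"
  show "e \<in> M'"
  proof (cases "e \<in> N")
    case True
    then obtain a where "a \<in> \<Union>N" "e \<in> nedges V E a" using edge_in_nedges by blast
    thus ?thesis using eq e by blast
  next
    case False
    have "e \<in> E" using pmE[OF M] e by blast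
    moreover have "\<not> fixed_single V E e" using M e unfolding fixed_single_def by blast
    ultimately have "fixed_double V E e" using False unfolding nonfixed_edges_def by blast
    thus ?thesis using M' unfolding fixed_double_def by blast
  qed
qed

lemma cfs_union:
  assumes F: "\<forall>v\<in>\<Union>N. complete_forcing_set (ncomp V E v) (nedges V E v) (F v)"
  shows "complete_forcing_set V E (\<Union>v\<in>\<Union>N. F v)"
  unfolding complete_forcing_set_def forcing_set_def
proof (intro conjI allI impI)
  show "(\<Union>v\<in>\<Union>N. F v) \<subseteq> E" using F N_sub unfolding complete_forcing_set_def nedges_def by blast
  fix M assume M: "perfect_matching V E M"
  show "(\<Union>v\<in>\<Union>N. F v) \<inter> M \<subseteq> M" by auto
  fix M' assume h: "perfect_matching V E M' \<and> (\<Union>v\<in>\<Union>N. F v) \<inter> M \<subseteq> M'"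
  have M': "perfect_matching V E M'" using h by simp
  have eq: "\<forall>v\<in>\<Union>N. M \<inter> nedges V E v = M' \<inter> nedges V E v"
  proof
    fix v assume v: "v \<in> \<Union>N"
    have p1: "perfect_matching (ncomp V E v) (nedges V E v) (M \<inter> nedges V E v)" using restrict_pm[OF M v] .
    have p2: "perfect_matching (ncomp V E v) (nedges V E v) (M' \<inter> nedges V E v)" using restrict_pm[OF M' v] .
    have Fs: "F v \<subseteq> nedges V E v" using F v unfolding complete_forcing_set_def by blast
    have "F v \<inter> (M \<inter> nedges V E v) \<subseteq> M' \<inter> nedges V E v" using h v Fs by blast
    hence "M' \<inter> nedges V E v = M \<inter> nedges V E v"
      using F v p1 p2 unfolding complete_forcing_set_def forcing_set_def by blast
    thus "M \<inter> nedges V E v = M' \<inter> nedges V E v" by simp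
  qed
  have "M \<subseteq> M'" using pm_sub[OF M M' eq] .
  moreover have "M' \<subseteq> M" using pm_sub[OF M' M] eq by metis
  ultimately show "M' = M" by blast
qed

lemma nedges_fin: "finite (nedges V E v)"
proof -
  have "nedges V E v \<subseteq> E" using N_sub by (auto simp: nedges_def)
  thus ?thesis using finE finite_subset by blast
qed

lemma nedges_ok: "\<forall>e\<in>nedges V E v. \<exists>a b. e = {a,b} \<and> e \<subseteq> ncomp V E v"
proof
  fix e assume e: "e \<in> nedges V E v"
  have eE: "e \<in> E" and es: "e \<subseteq> ncomp V E v" using e N_sub unfolding nedges_def by blast+
  obtain a b where ab: "e = {a,b}" using eE by (rule twoE)
  show "\<exists>a b. e = {a,b} \<and> e \<subseteq> ncomp V E v"
    by (rule exI[where x=a], rule exI[where x=b]) (simp add: ab[symmetric] es)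
qed

lemma disj:
  assumes "C \<in> normal_components V E" "C' \<in> normal_components V E" "C \<noteq> C'"
  shows "snd C \<inter> snd C' = {}"
proof (rule ccontr)
  assume "snd C \<inter> snd C' \<noteq> {}"
  then obtain e where e: "e \<in> snd C" "e \<in> snd C'" by auto
  obtain v v' where C: "C = (ncomp V E v, nedges V E v)" and C': "C' = (ncomp V E v', nedges V E v')"
    using assms unfolding nc_eq by blast
  have "e \<in> E" using e C N_sub unfolding nedges_def by auto
  then obtain a b where "e = {a,b}" by (rule twoE)
  hence "a \<in> ncomp V E v" "a \<in> ncomp V E v'" using e C C' unfolding nedges_def by auto
  hence "ncomp V E v = ncomp V E v'" using comp_same by metis
  hence "C = C'" using C C' by (simp add: nedges_def)
  thus False using assms(3) by simp
qed

lemma main: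
  "cf V E = (\<Sum>C\<in>normal_components V E. cf (fst C) (snd C))"
proof -
  let ?NC = "normal_components V E"
  have finN: "finite (\<Union>N)"
  proof (rule finite_Union)
    show "finite N" using finE N_sub finite_subset by blast
    fix e assume "e \<in> N"
    hence "e \<in> E" using N_sub by blast
    then obtain a b where "e = {a,b}" by (rule twoE)
    thus "finite e" by simp
  qed
  have finNC: "finite ?NC" unfolding nc_eq using finN by simp
  have Cform: "\<And>C. C \<in> ?NC \<Longrightarrow> \<exists>v\<in>\<Union>N. C = (ncomp V E v, nedges V E v)" unfolding nc_eq by blast
  have okE: "\<forall>e\<in>E. \<exists>a b. e = {a,b} \<and> e \<subseteq> V"
  proof
    fix e assume e: "e \<in> E"
    then obtain a b where ab: "e = {a,b}" by (rule twoE)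
    have eV: "e \<subseteq> V" using subV e by blast
    show "\<exists>a b. e = {a,b} \<and> e \<subseteq> V"
      by (rule exI[where x=a], rule exI[where x=b]) (simp add: ab[symmetric] eV)
  qed
  show ?thesis
  proof (rule antisym)
    define G where "G C = (SOME S. complete_forcing_set (fst C) (snd C) S \<and> card S = cf (fst C) (snd C))" for C
    have G: "complete_forcing_set (fst C) (snd C) (G C) \<and> card (G C) = cf (fst C) (snd C)" if CN: "C \<in> ?NC" for C
    proof -
      obtain v where "C = (ncomp V E v, nedges V E v)" using Cform[OF CN] by blast
      hence "\<exists>S. complete_forcing_set (fst C) (snd C) S \<and> card S = cf (fst C) (snd C)"
        using cf_attained[OF nedges_fin nedges_ok] by simp
      thus ?thesis unfolding G_def by (rule someI_ex)
    qed
    define F where "F v = G (ncomp V E v, nedges V E v)" for v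
    have "\<forall>v\<in>\<Union>N. complete_forcing_set (ncomp V E v) (nedges V E v) (F v)"
    proof
      fix v assume v: "v \<in> \<Union>N"
      hence "(ncomp V E v, nedges V E v) \<in> ?NC" unfolding nc_eq by (rule imageI)
      from G[OF this] show "complete_forcing_set (ncomp V E v) (nedges V E v) (F v)"
        unfolding F_def by simp
    qed
    hence T: "complete_forcing_set V E (\<Union>v\<in>\<Union>N. F v)" by (rule cfs_union)
    have "(\<Union>v\<in>\<Union>N. F v) = (\<Union>C\<in>?NC. G C)" unfolding F_def nc_eq by (simp only: image_image)
    hence "cf V E \<le> card (\<Union>C\<in>?NC. G C)" using cf_le[OF finE T] by simp
    also have "\<dots> \<le> (\<Sum>C\<in>?NC. card (G C))" by (rule card_UN_le[OF finNC])
    also have "\<dots> = (\<Sum>C\<in>?NC. cf (fst C) (snd C))" by (rule sum.cong[OF refl]) (simp add: G)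
    finally show "cf V E \<le> (\<Sum>C\<in>?NC. cf (fst C) (snd C))" .
  next
    obtain S where S: "complete_forcing_set V E S" "card S = cf V E" using cf_attained[OF finE okE] by blast
    have finS: "finite S" using S(1) finE unfolding complete_forcing_set_def by (meson finite_subset)
    have "(\<Sum>C\<in>?NC. cf (fst C) (snd C)) \<le> (\<Sum>C\<in>?NC. card (S \<inter> snd C))"
    proof (rule sum_mono)
      fix C assume "C \<in> ?NC"
      then obtain v where v: "v \<in> \<Union>N" "C = (ncomp V E v, nedges V E v)" using Cform by blast
      show "cf (fst C) (snd C) \<le> card (S \<inter> snd C)"
        using cf_le[OF nedges_fin cfs_restrict[OF S(1) v(1)]] v by simp
    qed
    also have "\<dots> = card (\<Union>C\<in>?NC. S \<inter> snd C)"
    proof (rule card_UN_disjoint[symmetric])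
      show "finite ?NC" by (rule finNC)
      show "\<forall>C\<in>?NC. finite (S \<inter> snd C)" using finS by blast
      show "\<forall>C\<in>?NC. \<forall>C'\<in>?NC. C \<noteq> C' \<longrightarrow> S \<inter> snd C \<inter> (S \<inter> snd C') = {}"
      proof (intro ballI impI)
        fix C C' assume "C \<in> ?NC" "C' \<in> ?NC" "C \<noteq> C'"
        hence "snd C \<inter> snd C' = {}" by (rule disj)
        thus "S \<inter> snd C \<inter> (S \<inter> snd C') = {}" by blast
      qed
    qed
    also have "\<dots> \<le> card S" by (rule card_mono[OF finS]) blast
    finally show "(\<Sum>C\<in>?NC. cf (fst C) (snd C)) \<le> cf V E" using S(2) by simp
  qed
qed

end

theorem mainTheorem1:
  assumes "hexagonal_system V E"
    and "\<exists>M. perfect_matching V E M"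
  shows "cf V E = (\<Sum>C\<in>normal_components V E. cf (fst C) (snd C))"
proof -
  have H: "finite V \<and> (\<forall>e\<in>E. lattice_edge e \<and> e \<subseteq> V) \<and> two_connected V E \<and>
     (\<forall>h. cell h \<and> \<not> exterior_cell V E h \<longrightarrow> hex_edges h \<subseteq> E)"
    using assms(1) unfolding hexagonal_system_def .
  have finV: "finite V" using H by (rule conjunct1)
  have sub: "\<forall>e\<in>E. lattice_edge e \<and> e \<subseteq> V" using H by (rule conjunct1[OF conjunct2])
  have two: "\<forall>e\<in>E. \<exists>a b. e = {a,b}"
  proof
    fix e assume "e \<in> E"
    hence "lattice_edge e" using sub by blast
    thus "\<exists>a b. e = {a,b}" unfolding lattice_edge_def
    proof (elim disjE exE conjE)
      fix x y :: int assume h: "e = {(x,y),(x+1,y)}" show ?thesis by (rule exI[of _ "(x,y)"], rule exI[of _ "(x+1,y)"], rule h)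
    next
      fix x y :: int assume "even (x+y)" and h: "e = {(x,y),(x,y+1)}" show ?thesis by (rule exI[of _ "(x,y)"], rule exI[of _ "(x,y+1)"], rule h)
    qed
  qed
  have subV: "\<forall>e\<in>E. e \<subseteq> V" using sub by blast
  have "E \<subseteq> Pow V" using subV by blast
  hence finE: "finite E" using finV by (metis finite_Pow_iff finite_subset)
  show ?thesis using main[OF two subV finE assms(2)] .
qed

end
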